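(* Let $p\in[1,\infty]$ and $m,n\in\mathbb N$, and let $$\mathbb H^n_G(m):=\Big\{\frac{\boldsymbol w}{\|\boldsymbol w\|_p}:\boldsymbol w\ne\boldsymbol0,\ w_i\in\{0,\pm\tfrac1m,\pm\tfrac2m,\dots,\pm1\},\ i=1,\dots,n\Big\}.$$ Then $|\mathbb H^n_G(m)|\le(2m+1)^n$, and for any $\boldsymbol x\in\mathbb S^n_p$ there exists $\boldsymbol y\in\mathbb H^n_G(m)$ such that for every $\boldsymbol z\in\mathbb R^n$: if $\boldsymbol y^{\mathrm T}\boldsymbol z\ge0$ then $\boldsymbol y^{\mathrm T}\boldsymbol z-\frac{\|\boldsymbol z\|_1}m\le\boldsymbol x^{\mathrm T}\boldsymbol z\le(1+\frac{n^{1/p}}m)\boldsymbol y^{\mathrm T}\boldsymbol z+\frac{\|\boldsymbol z\|_1}m$; if $\boldsymbol y^{\mathrm T}\boldsymbol z<0$ then $(1+\frac{n^{1/p}}m)\boldsymbol y^{\mathrm T}\boldsymbol z-\frac{\|\boldsymbol z\|_1}m\le\boldsymbol x^{\mathrm T}\boldsymbol z\le\boldsymbol y^{\mathrm T}\boldsymbol z+\frac{\|\boldsymbol z\|_1}m$.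
   Context: $\mathbb S^n_p=\{\boldsymbol x\in\mathbb R^n:\|\boldsymbol x\|_p=1\}$. *)

theory Defs
  imports "HOL-Analysis.Analysis" "HOL-Library.Extended_Real"
begin

definition pnorm :: "ereal \<Rightarrow> real ^ 'n \<Rightarrow> real" where
  "pnorm p x = (if p = \<infinity> then Max (range (\<lambda>i. \<bar>x $ i\<bar>))
               else (\<Sum>i\<in>UNIV. \<bar>x $ i\<bar> powr real_of_ereal p) powr (1 / real_of_ereal p))"

definition norm1 :: "real ^ 'n \<Rightarrow> real" where
  "norm1 z = (\<Sum>i\<in>UNIV. \<bar>z $ i\<bar>)"

text \<open>n^(1/p), with the convention 1/infinity = 0.\<close>
definition root_p :: "ereal \<Rightarrow> nat \<Rightarrow> real" where
  "root_p p n = (if p = \<infinity> then 1 else real n powr (1 / real_of_ereal p))"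

definition gridH :: "ereal \<Rightarrow> nat \<Rightarrow> (real ^ 'n) set" where
  "gridH p m = {(1 / pnorm p w) *\<^sub>R w | w. w \<noteq> 0 \<and>
      (\<forall>i. w $ i \<in> {real_of_int k / real m | k. \<bar>k\<bar> \<le> int m})}"

end

theory Submission
  imports Defs
begin

lemma pt_convex:
  fixes r a c B :: real
  assumes r: "r \<ge> 1" and a: "a \<ge> 0" and c: "c > 0" and B: "B > 0"
  shows "(a + c) powr r \<le> (1 + B) powr r * (1/(1+B) * a powr r + B/(1+B) * (c/B) powr r)"
proof (cases "a = 0")
  case True
  have "c powr r = B powr r * (c/B) powr r" using B c by (simp add: powr_divide)
  also have "B powr r = B * B powr (r - 1)" using B by (simp add: powr_mult_base)
  also have "B powr (r-1) \<le> (1+B) powr (r-1)" using B r by (intro powr_mono2) auto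
  hence "B * B powr (r - 1) * (c/B) powr r \<le> B * (1+B) powr (r - 1) * (c/B) powr r"
    using B by (intro mult_right_mono mult_left_mono) auto
  also have "(1+B) powr (r-1) = (1+B) powr r / (1+B)" using B by (simp add: powr_diff)
  finally show ?thesis using True B r by (simp add: field_simps)
next
  case False
  hence a': "a > 0" using a by auto
  define t where "t = B/(1+B)"
  have t: "0 \<le> t" "t \<le> 1" using B by (auto simp: t_def)
  have cv: "(\<lambda>x::real. x powr r) ((1 - t) *\<^sub>R a + t *\<^sub>R (c/B)) \<le> (1 - t) * a powr r + t * (c/B) powr r"
    using convex_onD[OF powr_convex[OF r] t, of a "c/B"] a' c B by auto
  have nz: "1 + B \<noteq> 0" using B by linarith
  moreover have t1: "1 - t = 1/(1+B)" using B nz by (simp add: t_def field_simps)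
  moreover have "t * (c/B) = c/(1+B)" using B by (simp add: t_def)
  moreover have "(1 - t) *\<^sub>R a + t *\<^sub>R (c/B) = (a + c) / (1 + B)"
    using t1 \<open>t * (c/B) = c/(1+B)\<close> by (simp add: add_divide_distrib)
  ultimately have "((a + c) / (1 + B)) powr r \<le> 1/(1+B) * a powr r + B/(1+B) * (c/B) powr r"
    using cv by (simp add: t_def)
  hence "(a + c) powr r / (1+B) powr r \<le> 1/(1+B) * a powr r + B/(1+B) * (c/B) powr r"
    using a c B by (simp add: powr_divide)
  thus ?thesis using B by (simp add: field_simps)
qed

lemma mink:
  fixes a :: "'n::finite \<Rightarrow> real" and r c :: real
  assumes r: "r \<ge> 1" and a: "\<And>i. a i \<ge> 0" and s: "(\<Sum>i\<in>UNIV. a i powr r) = 1" and c: "c > 0"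
  shows "(\<Sum>i\<in>UNIV. (a i + c) powr r) powr (1/r) \<le> 1 + real CARD('n) powr (1/r) * c"
proof -
  define B where "B = real CARD('n) powr (1/r) * c"
  have B: "B > 0" using c by (simp add: B_def)
  have Br: "B powr r = real CARD('n) * c powr r" using r c
    by (simp add: B_def powr_mult powr_powr)
  have "(\<Sum>i\<in>UNIV. (a i + c) powr r) \<le> (\<Sum>i\<in>UNIV. (1 + B) powr r * (1/(1+B) * a i powr r + B/(1+B) * (c/B) powr r))"
    by (intro sum_mono pt_convex[OF r a c B])
  also have "\<dots> = (1 + B) powr r * (1/(1+B) * (\<Sum>i\<in>UNIV. a i powr r) + B/(1+B) * (real CARD('n) * (c/B) powr r))"
    unfolding sum_distrib_left[symmetric] sum.distrib by (simp add: sum_distrib_left)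
  also have "real CARD('n) * (c/B) powr r = 1" using B c Br by (simp add: powr_divide)
  also have "(1 + B) powr r * (1/(1+B) * (\<Sum>i\<in>UNIV. a i powr r) + B/(1+B) * 1) = (1+B) powr r"
    using s B by (simp add: divide_simps)
  finally have "(\<Sum>i\<in>UNIV. (a i + c) powr r) powr (1/r) \<le> ((1+B) powr r) powr (1/r)"
    using r by (intro powr_mono2) (auto intro: sum_nonneg)
  also have "\<dots> = 1 + B" using r B by (simp add: powr_powr)
  finally show ?thesis by (simp add: B_def)
qed

definition rnd :: "nat \<Rightarrow> real \<Rightarrow> int" where
  "rnd m u = (if u \<ge> 0 then \<lceil>real m * u\<rceil> else - \<lceil>- real m * u\<rceil>)"

lemma rnd_props:
  assumes m: "m \<ge> 1"
  shows "\<bar>u\<bar> \<le> \<bar>real_of_int (rnd m u) / real m\<bar>"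
    and "\<bar>real_of_int (rnd m u) / real m\<bar> \<le> \<bar>u\<bar> + 1 / real m"
    and "\<bar>u - real_of_int (rnd m u) / real m\<bar> \<le> 1 / real m"
    and "\<bar>u\<bar> \<le> 1 \<Longrightarrow> \<bar>rnd m u\<bar> \<le> int m"
proof -
  have mp: "real m > 0" using m by simp
  have c1: "real m * u \<le> \<lceil>real m * u\<rceil>" "\<lceil>real m * u\<rceil> < real m * u + 1"
    by linarith+
  have c2: "- real m * u \<le> \<lceil>- real m * u\<rceil>" "\<lceil>- real m * u\<rceil> < - real m * u + 1"
    by linarith+
  have e1: "real_of_int \<lceil>real m * u\<rceil> / real m - u = (real_of_int \<lceil>real m * u\<rceil> - real m * u) / real m"
    using mp by (simp add: field_simps)
  have e2: "real_of_int \<lceil>- real m * u\<rceil> / real m + u = (real_of_int \<lceil>- real m * u\<rceil> - (- real m * u)) / real m"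
    using mp by (simp add: field_simps)
  have d1: "0 \<le> real_of_int \<lceil>real m * u\<rceil> / real m - u" "real_of_int \<lceil>real m * u\<rceil> / real m - u \<le> 1 / real m"
    unfolding e1 using c1 mp by (auto simp: divide_right_mono)
  have d2: "0 \<le> real_of_int \<lceil>- real m * u\<rceil> / real m + u" "real_of_int \<lceil>- real m * u\<rceil> / real m + u \<le> 1 / real m"
    unfolding e2 using mp
     by (intro divide_nonneg_nonneg divide_right_mono; use c2 in linarith)+
  define v where "v = real_of_int (rnd m u) / real m"
  have vv: "(u \<ge> 0 \<and> u \<le> v \<and> v \<le> u + 1 / real m) \<or> (u < 0 \<and> v \<le> u \<and> u - 1 / real m \<le> v)"
  proof (cases "u \<ge> 0")
    case True
    hence "v = real_of_int \<lceil>real m * u\<rceil> / real m" by (simp add: v_def rnd_def)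
    thus ?thesis using d1 True by auto
  next
    case False
    hence "v = - (real_of_int \<lceil>- real m * u\<rceil> / real m)" by (simp add: v_def rnd_def)
    thus ?thesis using d2 False by auto
  qed
  show "\<bar>u\<bar> \<le> \<bar>real_of_int (rnd m u) / real m\<bar>"
    using vv unfolding v_def[symmetric] by linarith
  show "\<bar>real_of_int (rnd m u) / real m\<bar> \<le> \<bar>u\<bar> + 1 / real m"
    using vv unfolding v_def[symmetric] by linarith
  show "\<bar>u - real_of_int (rnd m u) / real m\<bar> \<le> 1 / real m"
    using vv unfolding v_def[symmetric] by linarith
  assume u: "\<bar>u\<bar> \<le> 1"
  have "real m * u \<le> real m" "- real m * u \<le> real m" using mult_left_mono[of "-u" 1 "real m"] mult_left_mono[of u 1 "real m"] u mp by (auto simp: abs_le_iff)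
  hence "\<lceil>real m * u\<rceil> \<le> int m" "\<lceil>- real m * u\<rceil> \<le> int m"
    by (simp_all add: ceiling_le_iff)
  moreover have "u \<ge> 0 \<Longrightarrow> \<lceil>real m * u\<rceil> \<ge> 0" using mp
    by (metis ceiling_mono ceiling_zero mult_nonneg_nonneg less_imp_le)
  moreover have "\<lceil>- real m * u\<rceil> \<ge> 0" if "\<not> u \<ge> 0"
  proof -
    have "0 \<le> real m * (- u)" using mp that by (intro mult_nonneg_nonneg) auto
    hence "0 \<le> - real m * u" by simp
    thus ?thesis by (metis ceiling_mono ceiling_zero)
  qed
  ultimately show "\<bar>rnd m u\<bar> \<le> int m" by (auto simp: rnd_def)
qed

lemma key_ineq:
  fixes x w z :: "real ^ 'n" and N R :: real and m :: nat
  assumes m: "m \<ge> 1" and N: "1 \<le> N" "N \<le> 1 + R / real m"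
    and d: "\<And>i. \<bar>x $ i - w $ i\<bar> \<le> 1 / real m"
  defines "y \<equiv> (1 / N) *\<^sub>R w"
  shows "(y \<bullet> z \<ge> 0 \<longrightarrow>
                  y \<bullet> z - norm1 z / real m \<le> x \<bullet> z \<and>
                  x \<bullet> z \<le> (1 + R / real m) * (y \<bullet> z) + norm1 z / real m) \<and>
               (y \<bullet> z < 0 \<longrightarrow>
                  (1 + R / real m) * (y \<bullet> z) - norm1 z / real m \<le> x \<bullet> z \<and>
                  x \<bullet> z \<le> y \<bullet> z + norm1 z / real m)"
proof -
  have wy: "w \<bullet> z = N * (y \<bullet> z)" using N by (simp add: y_def)
  have "\<bar>(x - w) \<bullet> z\<bar> \<le> (\<Sum>i\<in>UNIV. \<bar>(x - w) $ i * z $ i\<bar>)"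
    unfolding inner_vec_def by (simp add: sum_abs)
  also have "\<dots> \<le> (\<Sum>i\<in>UNIV. 1 / real m * \<bar>z $ i\<bar>)"
  proof (intro sum_mono)
    fix i
    have "\<bar>x$i - w$i\<bar> * \<bar>z$i\<bar> \<le> 1 / real m * \<bar>z$i\<bar>" by (rule mult_right_mono[OF d]) simp
    thus "\<bar>(x - w) $ i * z $ i\<bar> \<le> 1 / real m * \<bar>z $ i\<bar>" by (simp add: abs_mult)
  qed
  also have "\<dots> = norm1 z / real m" by (simp add: norm1_def sum_divide_distrib)
  finally have e: "\<bar>x \<bullet> z - w \<bullet> z\<bar> \<le> norm1 z / real m" by (simp add: inner_diff_left)
  show ?thesis
  proof (intro conjI impI)
    assume "y \<bullet> z \<ge> 0"
    hence "y \<bullet> z \<le> N * (y \<bullet> z)" "N * (y \<bullet> z) \<le> (1 + R / real m) * (y \<bullet> z)"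
      using mult_right_mono[of 1 N "y \<bullet> z"] mult_right_mono[of N "1 + R / real m" "y \<bullet> z"] N by auto
    thus "y \<bullet> z - norm1 z / real m \<le> x \<bullet> z" "x \<bullet> z \<le> (1 + R / real m) * (y \<bullet> z) + norm1 z / real m"
      using e wy by linarith+
  next
    assume "y \<bullet> z < 0"
    hence "y \<bullet> z \<ge> N * (y \<bullet> z)" "N * (y \<bullet> z) \<ge> (1 + R / real m) * (y \<bullet> z)"
      using mult_right_mono_neg[of 1 N "y \<bullet> z"] mult_right_mono_neg[of N "1 + R / real m" "y \<bullet> z"] N by auto
    thus "(1 + R / real m) * (y \<bullet> z) - norm1 z / real m \<le> x \<bullet> z" "x \<bullet> z \<le> y \<bullet> z + norm1 z / real m"
      using e wy by linarith+
  qed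
qed

lemma pnorm_zero: "pnorm p (0 :: real ^ 'n) = 0"
  by (simp add: pnorm_def)

lemma pnorm_props:
  fixes p :: ereal and m :: nat and x :: "real ^ 'n"
  assumes p: "1 \<le> p" and m: "m \<ge> 1" and x: "pnorm p x = 1"
  defines "w \<equiv> (\<chi> i. real_of_int (rnd m (x$i)) / real m) :: real ^ 'n"
  shows "(\<forall>i. \<bar>x$i\<bar> \<le> 1) \<and> 1 \<le> pnorm p w \<and> pnorm p w \<le> 1 + root_p p CARD('n) / real m"
proof -
  have wi: "w $ i = real_of_int (rnd m (x$i)) / real m" for i by (simp add: w_def)
  have lo: "\<bar>x$i\<bar> \<le> \<bar>w$i\<bar>" for i unfolding wi by (rule rnd_props(1)[OF m])
  have hi: "\<bar>w$i\<bar> \<le> \<bar>x$i\<bar> + 1 / real m" for i unfolding wi by (rule rnd_props(2)[OF m])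
  show ?thesis
  proof (cases p)
    case PInf
    hence pn: "pnorm p v = Max (range (\<lambda>i. \<bar>v $ i\<bar>))" for v :: "real ^ 'n" by (simp add: pnorm_def)
    have rp: "root_p p CARD('n) = 1" using PInf by (simp add: root_p_def)
    have xi: "\<forall>i. \<bar>x$i\<bar> \<le> 1"
    proof
      fix i have "\<bar>x$i\<bar> \<le> Max (range (\<lambda>i. \<bar>x $ i\<bar>))" by (rule Max_ge) auto
      thus "\<bar>x$i\<bar> \<le> 1" using x unfolding pn by simp
    qed
    obtain j where j: "\<bar>x$j\<bar> = 1"
    proof -
      have "Max (range (\<lambda>i. \<bar>x $ i\<bar>)) \<in> range (\<lambda>i. \<bar>x $ i\<bar>)" by (intro Max_in) auto
      thus ?thesis using x that unfolding pn by auto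
    qed
    have "\<bar>w$j\<bar> \<le> Max (range (\<lambda>i. \<bar>w $ i\<bar>))" by (rule Max_ge) auto
    hence "1 \<le> pnorm p w" unfolding pn using j lo[of j] by linarith
    moreover have "pnorm p w \<le> 1 + 1 / real m" unfolding pn
    proof (subst Max_le_iff, simp_all, intro allI)
      fix i show "\<bar>w$i\<bar> \<le> 1 + 1 / real m" using hi[of i] xi[rule_format, of i] by linarith
    qed
    ultimately show ?thesis using xi rp by simp
  next
    case (real r)
    hence r: "r \<ge> 1" using p by simp
    have pn: "pnorm p v = (\<Sum>i\<in>UNIV. \<bar>v $ i\<bar> powr r) powr (1 / r)" for v :: "real ^ 'n"
      using real by (simp add: pnorm_def)
    have rp: "root_p p CARD('n) = real CARD('n) powr (1 / r)" using real by (simp add: root_p_def)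
    define S where "S = (\<Sum>i\<in>UNIV. \<bar>x $ i\<bar> powr r)"
    have S0: "S \<ge> 0" unfolding S_def by (intro sum_nonneg) simp
    have "S powr (1/r) = 1" using x by (simp add: pn S_def)
    hence "(S powr (1/r)) powr r = 1" by simp
    hence S1: "S = 1" using S0 r by (simp add: powr_powr)
    have xi: "\<forall>i. \<bar>x$i\<bar> \<le> 1"
    proof (rule allI, rule ccontr)
      fix i assume "\<not> \<bar>x$i\<bar> \<le> 1"
      hence "1 < \<bar>x$i\<bar> powr r" using r by simp
      moreover have "\<bar>x$i\<bar> powr r \<le> S" unfolding S_def
        by (rule member_le_sum) auto
      ultimately show False using S1 by simp
    qed
    have "S \<le> (\<Sum>i\<in>UNIV. \<bar>w $ i\<bar> powr r)" unfolding S_def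
      by (intro sum_mono powr_mono2) (use r lo in auto)
    hence "1 \<le> (\<Sum>i\<in>UNIV. \<bar>w $ i\<bar> powr r)" using S1 by simp
    hence g1: "1 \<le> pnorm p w" unfolding pn
      by (rule ge_one_powr_ge_zero) (use r in simp)
    have "(\<Sum>i\<in>UNIV. \<bar>w $ i\<bar> powr r) \<le> (\<Sum>i\<in>UNIV. (\<bar>x $ i\<bar> + 1 / real m) powr r)"
      by (intro sum_mono powr_mono2) (use r hi in auto)
    hence "pnorm p w \<le> (\<Sum>i\<in>UNIV. (\<bar>x $ i\<bar> + 1 / real m) powr r) powr (1/r)" unfolding pn
      by (intro powr_mono2) (use r in \<open>auto intro: sum_nonneg\<close>)
    also have "\<dots> \<le> 1 + real CARD('n) powr (1/r) * (1 / real m)"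
      by (rule mink[OF r]) (use S1 m in \<open>auto simp: S_def\<close>)
    finally show ?thesis using xi g1 rp by simp
  next
    case MInf
    thus ?thesis using p by simp
  qed
qed


theorem lemma4p10:
  fixes p :: ereal and m :: nat
  assumes "1 \<le> p" and "m \<ge> 1"
  shows "finite (gridH p m :: (real ^ 'n) set)
       \<and> card (gridH p m :: (real ^ 'n) set) \<le> (2 * m + 1) ^ CARD('n)
       \<and> (\<forall>x :: real ^ 'n. pnorm p x = 1 \<longrightarrow>
            (\<exists>y \<in> gridH p m. \<forall>z :: real ^ 'n.
               (y \<bullet> z \<ge> 0 \<longrightarrow>
                  y \<bullet> z - norm1 z / real m \<le> x \<bullet> z \<and>
                  x \<bullet> z \<le> (1 + root_p p CARD('n) / real m) * (y \<bullet> z) + norm1 z / real m) \<and>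
               (y \<bullet> z < 0 \<longrightarrow>
                  (1 + root_p p CARD('n) / real m) * (y \<bullet> z) - norm1 z / real m \<le> x \<bullet> z \<and>
                  x \<bullet> z \<le> y \<bullet> z + norm1 z / real m)))"
proof -
  have mp: "real m > 0" using assms by simp
  define G where "G = (\<lambda>k. real_of_int k / real m) ` {-int m..int m}"
  define T where "T = (\<lambda>f. \<chi> i. f i) ` (PiE UNIV (\<lambda>_::'n. G))"
  have sub: "gridH p m \<subseteq> (\<lambda>w. (1 / pnorm p w) *\<^sub>R w) ` T"
  proof
    fix v assume "v \<in> (gridH p m :: (real ^ 'n) set)"
    then obtain w :: "real ^ 'n" where v: "v = (1 / pnorm p w) *\<^sub>R w"
      and wg: "\<forall>i. w $ i \<in> {real_of_int k / real m | k. \<bar>k\<bar> \<le> int m}"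
      unfolding gridH_def by blast
    have "(\<lambda>i. w $ i) \<in> PiE UNIV (\<lambda>_. G)"
    proof
      fix i show "w $ i \<in> G" using wg unfolding G_def by (force simp: abs_le_iff)
    qed auto
    hence "w \<in> T" unfolding T_def by (intro image_eqI[where x="\<lambda>i. w $ i"]) auto
    thus "v \<in> (\<lambda>w. (1 / pnorm p w) *\<^sub>R w) ` T" using v by blast
  qed
  have fG: "finite G" unfolding G_def by simp
  have cG: "card G \<le> 2 * m + 1"
  proof -
    have "card G \<le> card {-int m..int m}" unfolding G_def by (rule card_image_le) simp
    also have "\<dots> = 2 * m + 1" by simp
    finally show ?thesis .
  qed
  have fT: "finite T" unfolding T_def using fG by (intro finite_imageI finite_PiE) auto
  have cT: "card T \<le> (2 * m + 1) ^ CARD('n)"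
  proof -
    have "card T \<le> card (PiE UNIV (\<lambda>_::'n. G))" unfolding T_def by (rule card_image_le) (use fG in \<open>auto intro: finite_PiE\<close>)
    also have "\<dots> = card G ^ CARD('n)" by (simp add: card_PiE)
    also have "\<dots> \<le> (2 * m + 1) ^ CARD('n)" by (rule power_mono[OF cG]) simp
    finally show ?thesis .
  qed
  have fin: "finite (gridH p m :: (real ^ 'n) set)"
    using sub fT by (meson finite_imageI finite_subset)
  have card: "card (gridH p m :: (real ^ 'n) set) \<le> (2 * m + 1) ^ CARD('n)"
  proof -
    have "card (gridH p m :: (real ^ 'n) set) \<le> card ((\<lambda>w. (1 / pnorm p w) *\<^sub>R w) ` T)"
      by (rule card_mono[OF _ sub]) (use fT in simp)
    also have "\<dots> \<le> card T" by (rule card_image_le[OF fT])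
    finally show ?thesis using cT by linarith
  qed
  have approx: "\<exists>y \<in> gridH p m. \<forall>z :: real ^ 'n.
               (y \<bullet> z \<ge> 0 \<longrightarrow>
                  y \<bullet> z - norm1 z / real m \<le> x \<bullet> z \<and>
                  x \<bullet> z \<le> (1 + root_p p CARD('n) / real m) * (y \<bullet> z) + norm1 z / real m) \<and>
               (y \<bullet> z < 0 \<longrightarrow>
                  (1 + root_p p CARD('n) / real m) * (y \<bullet> z) - norm1 z / real m \<le> x \<bullet> z \<and>
                  x \<bullet> z \<le> y \<bullet> z + norm1 z / real m)"
    if x: "pnorm p x = 1" for x :: "real ^ 'n"
  proof -
    define w :: "real ^ 'n" where "w = (\<chi> i. real_of_int (rnd m (x$i)) / real m)"
    have wi: "w $ i = real_of_int (rnd m (x$i)) / real m" for i by (simp add: w_def)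
    have P: "(\<forall>i. \<bar>x$i\<bar> \<le> 1) \<and> 1 \<le> pnorm p w \<and> pnorm p w \<le> 1 + root_p p CARD('n) / real m"
      unfolding w_def by (rule pnorm_props[OF assms x])
    have w0: "w \<noteq> 0"
    proof
      assume "w = 0"
      hence "pnorm p w = 0" by (simp add: pnorm_zero)
      thus False using P by simp
    qed
    have wg: "\<forall>i. w $ i \<in> {real_of_int k / real m | k. \<bar>k\<bar> \<le> int m}"
    proof
      fix i
      show "w $ i \<in> {real_of_int k / real m | k. \<bar>k\<bar> \<le> int m}"
        using rnd_props(4)[OF assms(2), of "x$i"] P unfolding wi by blast
    qed
    have "(1 / pnorm p w) *\<^sub>R w \<in> gridH p m"
      unfolding gridH_def using w0 wg by blast
    show ?thesis
    proof (rule bexI[OF _ \<open>(1 / pnorm p w) *\<^sub>R w \<in> gridH p m\<close>], intro allI)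
      fix z :: "real ^ 'n"
      show "((1 / pnorm p w) *\<^sub>R w \<bullet> z \<ge> 0 \<longrightarrow>
                  (1 / pnorm p w) *\<^sub>R w \<bullet> z - norm1 z / real m \<le> x \<bullet> z \<and>
                  x \<bullet> z \<le> (1 + root_p p CARD('n) / real m) * ((1 / pnorm p w) *\<^sub>R w \<bullet> z) + norm1 z / real m) \<and>
               ((1 / pnorm p w) *\<^sub>R w \<bullet> z < 0 \<longrightarrow>
                  (1 + root_p p CARD('n) / real m) * ((1 / pnorm p w) *\<^sub>R w \<bullet> z) - norm1 z / real m \<le> x \<bullet> z \<and>
                  x \<bullet> z \<le> (1 / pnorm p w) *\<^sub>R w \<bullet> z + norm1 z / real m)"
        by (rule key_ineq[OF assms(2)]) (use P rnd_props(3)[OF assms(2)] in \<open>auto simp: wi\<close>)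
    qed
  qed
  show ?thesis using fin card approx by blast
qed

end
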